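(* The Lambda word $\Lambda_\theta$ is rich; that is, every nonempty prefix of $\Lambda_\theta$ has a nonempty palindromic suffix that occurs exactly once in that prefix, and equivalently every finite factor $w$ of $\Lambda_\theta$ contains exactly $|w|+1$ distinct palindromic factors (counting the empty word).
   Context: Fix an irrational $\theta$ with $1<\theta<2$. Let $S(\theta)=\{i+j\theta : i,j\in\mathbb{N}_0\}$ and let $s_0<s_1<s_2<\cdots$ be its elements in increasing order. Put $\delta(n)=s_{n+1}-s_n$. Let $\lambda$ be the map from the set of values $\{\delta(n):n\ge0\}$ to $\mathbb{N}_0$ that numbers the distinct values in order of first occurrence: $\lambda(\delta(0))=0$, and the $m$-th distinct value to appear in the sequence $\delta(0),\delta(1),\dots$ (counting from $m=0$) receives label $m$. The Lambda word is the right-infinite word $\Lambda_\theta=\lambda(\delta(0))\lambda(\delta(1))\lambda(\delta(2))\cdots$ over the alphabet $\mathbb{N}_0$. A factor is a finite block of consecutive letters; a palindrome is a finite word equal to its reversal; $|w|$ denotes the length of $w$. A finite word of length $n$ is rich if it has exactly $n+1$ distinct palindromic factors (including the empty word), and an infinite word is rich if all its finite factors are rich. *)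

theory Defs
  imports Complex_Main "HOL-Library.Sublist"
begin

definition Sset :: "real \<Rightarrow> real set" where
  "Sset \<theta> = {real i + real j * \<theta> | i j :: nat. True}"

definition s_seq :: "real \<Rightarrow> nat \<Rightarrow> real" where
  "s_seq \<theta> n = (THE x. x \<in> Sset \<theta> \<and> card {y \<in> Sset \<theta>. y < x} = n
                        \<and> finite {y \<in> Sset \<theta>. y < x})"

definition delta :: "real \<Rightarrow> nat \<Rightarrow> real" where
  "delta \<theta> n = s_seq \<theta> (Suc n) - s_seq \<theta> n"

text \<open>Labelling by order of first occurrence: the label of delta n is the number of
  distinct values occurring before the first occurrence of the value delta n.\<close>
definition lambda_word :: "real \<Rightarrow> nat \<Rightarrow> nat" where
  "lambda_word \<theta> n =
     (let k = (LEAST k. delta \<theta> k = delta \<theta> n) in card (delta \<theta> ` {..<k}))"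

definition factor_of :: "nat list \<Rightarrow> (nat \<Rightarrow> nat) \<Rightarrow> bool" where
  "factor_of w x \<longleftrightarrow> (\<exists>i. w = map x [i..<i + length w])"

definition palindrome :: "'a list \<Rightarrow> bool" where
  "palindrome w \<longleftrightarrow> rev w = w"

definition pal_factors :: "'a list \<Rightarrow> 'a list set" where
  "pal_factors w = {u. sublist u w \<and> palindrome u}"

definition rich_finite :: "'a list \<Rightarrow> bool" where
  "rich_finite w \<longleftrightarrow> card (pal_factors w) = length w + 1"

definition rich_infinite :: "(nat \<Rightarrow> nat) \<Rightarrow> bool" where
  "rich_infinite x \<longleftrightarrow> (\<forall>w. factor_of w x \<longrightarrow> rich_finite w)"

definition occ_count :: "'a list \<Rightarrow> 'a list \<Rightarrow> nat" where
  "occ_count u w = card {i. i + length u \<le> length w \<and> take (length u) (drop i w) = u}"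

end

theory Submission
  imports Defs
begin


lemma finite_pal: "finite (pal_factors w)"
proof -
  have "pal_factors w \<subseteq> {u. set u \<subseteq> set w \<and> length u \<le> length w}"
    by (auto simp: pal_factors_def dest: set_mono_sublist sublist_length_le)
  moreover have "finite {u. set u \<subseteq> set w \<and> length u \<le> length w}"
    by (rule finite_lists_length_le) simp
  ultimately show ?thesis by (rule finite_subset)
qed

lemma pal_rev: "pal_factors (rev w) = pal_factors w"
  unfolding pal_factors_def palindrome_def
  by (metis sublist_rev)

lemma pal_mono: "sublist v w \<Longrightarrow> pal_factors v \<subseteq> pal_factors w"
  unfolding pal_factors_def by (auto intro: sublist_order.order_trans)

lemma two_pal_suffix:
  assumes "suffix u (w @ [c])" "suffix v (w @ [c])" "palindrome u" "palindrome v"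
    "length u < length v"
  shows "sublist u w"
proof -
  have "suffix u v" using assms suffix_length_suffix by (metis less_imp_le)
  hence "prefix (rev u) (rev v)" by (simp add: suffix_to_prefix)
  hence "prefix u v" using assms(3,4) by (simp add: palindrome_def)
  then obtain r where v: "v = u @ r" by (auto simp: prefix_def)
  with assms(5) have "r \<noteq> []" by auto
  then obtain r' d where r: "r = r' @ [d]" by (metis rev_exhaust)
  from assms(2) obtain z where "w @ [c] = z @ v" by (auto simp: suffix_def)
  hence "w = z @ u @ r'" using v r by simp
  thus ?thesis by auto
qed

lemma pal_snoc: "card (pal_factors (w @ [c])) \<le> Suc (card (pal_factors w))"
proof (cases "pal_factors (w @ [c]) \<subseteq> pal_factors w")
  case True
  thus ?thesis using card_mono[OF finite_pal True] by simp
next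
  case False
  then obtain u where u: "u \<in> pal_factors (w @ [c])" "u \<notin> pal_factors w" by blast
  have "pal_factors (w @ [c]) \<subseteq> insert u (pal_factors w)"
  proof
    fix v assume v: "v \<in> pal_factors (w @ [c])"
    show "v \<in> insert u (pal_factors w)"
    proof (rule ccontr)
      assume nv: "v \<notin> insert u (pal_factors w)"
      have su: "suffix u (w @ [c])" "palindrome u" using u by (auto simp: pal_factors_def sublist_snoc)
      have sv: "suffix v (w @ [c])" "palindrome v" using v nv by (auto simp: pal_factors_def sublist_snoc)
      have "length u \<noteq> length v"
      proof
        assume "length u = length v"
        hence "u = v" using su sv suffix_length_suffix suffix_order.antisym by (metis order_refl)
        thus False using nv by simp
      qed
      hence "length u < length v \<or> length v < length u" by arith
      thus False
      proof
        assume "length u < length v"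
        hence "sublist u w" by (rule two_pal_suffix[OF su(1) sv(1) su(2) sv(2)])
        thus False using u su by (simp add: pal_factors_def)
      next
        assume "length v < length u"
        hence "sublist v w" by (rule two_pal_suffix[OF sv(1) su(1) sv(2) su(2)])
        thus False using nv sv by (simp add: pal_factors_def)
      qed
    qed
  qed
  hence "card (pal_factors (w @ [c])) \<le> card (insert u (pal_factors w))"
    by (rule card_mono[rotated]) (simp add: finite_pal)
  also have "\<dots> \<le> Suc (card (pal_factors w))" by (simp add: card_insert_if finite_pal)
  finally show ?thesis .
qed

lemma pal_cons: "card (pal_factors (c # w)) \<le> Suc (card (pal_factors w))"
  using pal_snoc[of "rev w" c] by (metis pal_rev rev.simps(2) rev_rev_ident)

lemma pal_nil: "pal_factors [] = {[]}"
  by (auto simp: pal_factors_def palindrome_def)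

lemma pal_le: "card (pal_factors w) \<le> length w + 1"
proof (induction w rule: rev_induct)
  case Nil thus ?case by (simp add: pal_nil)
next
  case (snoc c w) thus ?case using pal_snoc[of w c] by simp
qed

lemma pal_app: "card (pal_factors (x @ w @ z)) \<le> card (pal_factors w) + length x + length z"
proof (induction x)
  case Nil
  show ?case
  proof (induction z rule: rev_induct)
    case Nil thus ?case by simp
  next
    case (snoc c z) thus ?case using pal_snoc[of "w @ z" c] by simp
  qed
next
  case (Cons a x) thus ?case using pal_cons[of a "x @ w @ z"] by simp
qed

lemma unioc_not_sublist:
  assumes "occ_count u (w @ [c]) = 1" "suffix u (w @ [c])"
  shows "\<not> sublist u w"
proof
  assume "sublist u w"
  then obtain a b where w: "w = a @ u @ b" by (auto simp: sublist_def)
  from assms(2) obtain z where z: "w @ [c] = z @ u" by (auto simp: suffix_def)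
  let ?M = "{i. i + length u \<le> length (w @ [c]) \<and> take (length u) (drop i (w @ [c])) = u}"
  have "length a \<in> ?M" using w by simp
  moreover have "length z \<in> ?M" by (simp add: z)
  moreover have "length a \<noteq> length z" using w z by (metis add_Suc_right add_le_cancel_left length_append length_append_singleton not_less_eq_eq le_add1 add.assoc)
  moreover have "finite ?M" by (rule finite_subset[of _ "{..length (w@[c])}"]) auto
  ultimately have "card {length a, length z} \<le> card ?M"
    by (intro card_mono) auto
  hence "card ?M \<ge> 2" using \<open>length a \<noteq> length z\<close> by simp
  thus False using assms(1) by (simp add: occ_count_def)
qed



definition rk :: "real \<Rightarrow> real \<Rightarrow> nat" where
  "rk \<theta> x = card {y \<in> Sset \<theta>. y < x}"

context
  fixes \<theta> :: real
  assumes irr: "\<theta> \<notin> \<rat>" and gt1: "1 < \<theta>"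
begin

lemma S_mem: "x \<in> Sset \<theta> \<longleftrightarrow> (\<exists>i j::nat. x = real i + real j * \<theta>)"
  by (auto simp: Sset_def)

lemma uniq:
  assumes "of_int a + of_int b * \<theta> = of_int a' + of_int b' * \<theta>"
  shows "a = a' \<and> b = b'"
proof -
  have bb: "b = b'"
  proof (rule ccontr)
    assume "b \<noteq> b'"
    hence ne: "real_of_int (b - b') \<noteq> 0" by simp
    from assms have "real_of_int (b - b') * \<theta> = of_int (a' - a)" by (simp add: algebra_simps)
    hence "\<theta> = of_int (a' - a) / of_int (b - b')" using ne by (simp add: field_simps)
    hence "\<theta> \<in> \<rat>" by simp
    thus False using irr by simp
  qed
  with assms show ?thesis by simp
qed

lemma S_nonneg: "x \<in> Sset \<theta> \<Longrightarrow> 0 \<le> x"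
  using gt1 by (auto simp: S_mem)

lemma S_fin: "finite {y \<in> Sset \<theta>. y < x}"
proof -
  let ?N = "nat \<lceil>x\<rceil>"
  have "{y \<in> Sset \<theta>. y < x} \<subseteq> (\<lambda>(i,j). real i + real j * \<theta>) ` ({..?N} \<times> {..?N})"
  proof
    fix y assume "y \<in> {y \<in> Sset \<theta>. y < x}"
    then obtain i j :: nat where y: "y = real i + real j * \<theta>" "y < x" by (auto simp: S_mem)
    have "real j * 1 \<le> real j * \<theta>" using gt1 by (intro mult_left_mono) auto
    hence "real i < x" "real j < x" using y gt1 by (smt (verit) of_nat_0_le_iff mult_nonneg_nonneg)+
    hence "i \<le> ?N" "j \<le> ?N" by linarith+
    thus "y \<in> (\<lambda>(i,j). real i + real j * \<theta>) ` ({..?N} \<times> {..?N})" using y by force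
  qed
  thus ?thesis by (rule finite_subset) auto
qed

lemma rk_less: "x \<in> Sset \<theta> \<Longrightarrow> x < x' \<Longrightarrow> rk \<theta> x < rk \<theta> x'"
  unfolding rk_def
  by (rule psubset_card_mono[OF S_fin]) auto

lemma rk_inj: "x \<in> Sset \<theta> \<Longrightarrow> x' \<in> Sset \<theta> \<Longrightarrow> rk \<theta> x = rk \<theta> x' \<Longrightarrow> x = x'"
  by (metis linorder_neqE_linordered_idom rk_less less_irrefl)

lemma rk_surj: "\<exists>x\<in>Sset \<theta>. rk \<theta> x = n"
proof (induction n)
  case 0
  have "(0::real) \<in> Sset \<theta>" by (auto simp: S_mem intro: exI[of _ 0])
  moreover have "{y \<in> Sset \<theta>. y < 0} = {}" using S_nonneg by force
  hence "rk \<theta> 0 = 0" unfolding rk_def by (metis card.empty)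
  ultimately show ?case by blast
next
  case (Suc n)
  then obtain x where x: "x \<in> Sset \<theta>" "rk \<theta> x = n" by blast
  let ?T = "{y \<in> Sset \<theta>. x < y \<and> y \<le> x + 1}"
  have x1: "x + 1 \<in> Sset \<theta>" using x(1) by (auto simp: S_mem) (metis of_nat_Suc add.commute add.left_commute)
  have finT: "finite ?T" by (rule finite_subset[OF _ S_fin[of "x + 2"]]) auto
  have neT: "?T \<noteq> {}" using x1 by (intro notI) (drule equals0D[of _ "x+1"], simp)
  define x' where "x' = Min ?T"
  have x'T: "x' \<in> ?T" unfolding x'_def using finT neT by (rule Min_in)
  have "{y \<in> Sset \<theta>. y < x'} = insert x {y \<in> Sset \<theta>. y < x}"
  proof (intro set_eqI iffI)
    fix y assume y: "y \<in> {y \<in> Sset \<theta>. y < x'}"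
    show "y \<in> insert x {y \<in> Sset \<theta>. y < x}"
    proof (rule ccontr)
      assume "y \<notin> insert x {y \<in> Sset \<theta>. y < x}"
      hence "y \<in> ?T" using y x'T by auto
      hence "x' \<le> y" unfolding x'_def using finT by simp
      thus False using y by simp
    qed
  next
    fix y assume "y \<in> insert x {y \<in> Sset \<theta>. y < x}"
    thus "y \<in> {y \<in> Sset \<theta>. y < x'}" using x'T x by auto
  qed
  hence "rk \<theta> x' = Suc n" unfolding rk_def using x S_fin[of x] by (simp add: rk_def)
  thus ?case using x'T by blast
qed

lemma s_prop: "s_seq \<theta> n \<in> Sset \<theta> \<and> rk \<theta> (s_seq \<theta> n) = n"
proof -
  obtain x where x: "x \<in> Sset \<theta>" "rk \<theta> x = n" using rk_surj by blast
  have "s_seq \<theta> n = x"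
    unfolding s_seq_def
  proof (rule the_equality)
    show "x \<in> Sset \<theta> \<and> card {y \<in> Sset \<theta>. y < x} = n \<and> finite {y \<in> Sset \<theta>. y < x}"
      using x S_fin by (simp add: rk_def)
  next
    fix y assume "y \<in> Sset \<theta> \<and> card {z \<in> Sset \<theta>. z < y} = n \<and> finite {z \<in> Sset \<theta>. z < y}"
    thus "y = x" using x rk_inj by (simp add: rk_def)
  qed
  thus ?thesis using x by simp
qed

lemma s_in: "s_seq \<theta> n \<in> Sset \<theta>" using s_prop by simp
lemma s_rk: "rk \<theta> (s_seq \<theta> n) = n" using s_prop by simp

lemma s_of: "x \<in> Sset \<theta> \<Longrightarrow> s_seq \<theta> (rk \<theta> x) = x"
  using rk_inj s_in s_rk by blast

lemma s_less_iff: "s_seq \<theta> n < s_seq \<theta> n' \<longleftrightarrow> n < n'"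
  by (metis linorder_neqE_linordered_idom not_less_iff_gr_or_eq rk_less s_in s_rk)

lemma s_le_iff: "s_seq \<theta> n \<le> s_seq \<theta> n' \<longleftrightarrow> n \<le> n'"
  by (meson not_le s_less_iff)

lemma s_next: "x \<in> Sset \<theta> \<Longrightarrow> x < s_seq \<theta> (Suc n) \<Longrightarrow> x \<le> s_seq \<theta> n"
  by (metis less_Suc_eq_le s_less_iff s_le_iff s_of)

lemma s_between: "x \<in> Sset \<theta> \<Longrightarrow> s_seq \<theta> m \<le> x \<Longrightarrow> x \<le> s_seq \<theta> n
   \<Longrightarrow> \<exists>k. m \<le> k \<and> k \<le> n \<and> x = s_seq \<theta> k"
  by (metis s_le_iff s_of)

end


lemma lam_eq: "delta \<theta> a = delta \<theta> b \<Longrightarrow> lambda_word \<theta> a = lambda_word \<theta> b"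
  by (simp add: lambda_word_def)

lemma lam_lt:
  assumes "(LEAST k. delta \<theta> k = delta \<theta> a) < (LEAST k. delta \<theta> k = delta \<theta> b)"
  shows "lambda_word \<theta> a < lambda_word \<theta> b"
proof -
  let ?ka = "LEAST k. delta \<theta> k = delta \<theta> a"
  let ?kb = "LEAST k. delta \<theta> k = delta \<theta> b"
  have da: "delta \<theta> ?ka = delta \<theta> a" by (rule LeastI) (rule refl)
  have "delta \<theta> ` {..<?ka} \<subset> delta \<theta> ` {..<?kb}"
  proof
    show "delta \<theta> ` {..<?ka} \<subseteq> delta \<theta> ` {..<?kb}" using assms by auto
    have "delta \<theta> ?ka \<notin> delta \<theta> ` {..<?ka}"
    proof
      assume "delta \<theta> ?ka \<in> delta \<theta> ` {..<?ka}"
      then obtain j where "j < ?ka" "delta \<theta> j = delta \<theta> a" using da by auto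
      thus False using not_less_Least by blast
    qed
    moreover have "delta \<theta> ?ka \<in> delta \<theta> ` {..<?kb}" using assms by auto
    ultimately show "delta \<theta> ` {..<?ka} \<noteq> delta \<theta> ` {..<?kb}" by blast
  qed
  hence "card (delta \<theta> ` {..<?ka}) < card (delta \<theta> ` {..<?kb})"
    by (rule psubset_card_mono[rotated]) simp
  thus ?thesis by (simp add: lambda_word_def)
qed

lemma lam_inj: "lambda_word \<theta> a = lambda_word \<theta> b \<Longrightarrow> delta \<theta> a = delta \<theta> b"
proof (rule ccontr)
  assume eq: "lambda_word \<theta> a = lambda_word \<theta> b" and ne: "delta \<theta> a \<noteq> delta \<theta> b"
  let ?ka = "LEAST k. delta \<theta> k = delta \<theta> a"
  let ?kb = "LEAST k. delta \<theta> k = delta \<theta> b"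
  have da: "delta \<theta> ?ka = delta \<theta> a" by (rule LeastI) (rule refl)
  have db: "delta \<theta> ?kb = delta \<theta> b" by (rule LeastI) (rule refl)
  have "?ka \<noteq> ?kb" using da db ne by metis
  hence "?ka < ?kb \<or> ?kb < ?ka" by arith
  thus False using lam_lt[of \<theta> a b] lam_lt[of \<theta> b a] eq by auto
qed

context
  fixes \<theta> :: real
  assumes irr: "\<theta> \<notin> \<rat>" and gt1: "1 < \<theta>"
begin

abbreviation "s \<equiv> s_seq \<theta>"
abbreviation "S \<equiv> Sset \<theta>"

lemma main:
  assumes n1: "1 \<le> n"
  shows "\<exists>m<n. (\<forall>t<n-m. delta \<theta> (m+t) = delta \<theta> (n-1-t))
           \<and> (\<forall>i. i + (n-m) \<le> n \<and> (\<forall>t<n-m. delta \<theta> (i+t) = delta \<theta> (m+t)) \<longrightarrow> i = m)"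
proof -
  note sin = s_in[OF irr gt1] and sless = s_less_iff[OF irr gt1] and sle = s_le_iff[OF irr gt1]
  note snext = s_next[OF irr gt1] and sbet = s_between[OF irr gt1]
  note Smem = S_mem[OF irr gt1] and un = uniq[OF irr gt1]
  define y where "y = s n"
  have yS: "y \<in> S" unfolding y_def by (rule sin)
  have "0 \<le> s 0" using S_nonneg[OF irr gt1 sin] .
  moreover have "s 0 < y" unfolding y_def using n1 sless by simp
  ultimately have ypos: "0 < y" by simp
  define A where "A = nat \<lfloor>y\<rfloor>"
  define B where "B = nat \<lfloor>y / \<theta>\<rfloor>"
  have hA: "real A \<le> y" unfolding A_def using ypos by linarith
  have "0 \<le> y / \<theta>" using ypos gt1 by simp
  hence "real B \<le> y / \<theta>" unfolding B_def by linarith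
  hence hB: "real B * \<theta> \<le> y" using gt1 by (simp add: pos_le_divide_eq)
  have bound: "\<exists>i j. z = real i + real j * \<theta> \<and> i \<le> A \<and> j \<le> B" if zz: "z \<in> S" "z \<le> y" for z
  proof -
    obtain i j :: nat where z: "z = real i + real j * \<theta>" using zz Smem by auto
    have "real j * \<theta> \<ge> 0" using gt1 by simp
    hence "real i \<le> y" using z zz by linarith
    hence "i \<le> A" unfolding A_def by linarith
    have "real j * \<theta> \<le> y" using z zz by simp
    hence "real j \<le> y / \<theta>" using gt1 by (simp add: pos_le_divide_eq)
    hence "j \<le> B" unfolding B_def by linarith
    show ?thesis using z \<open>i \<le> A\<close> \<open>j \<le> B\<close> by blast
  qed
  define c where "c = real A + real B * \<theta>"
  have refl: "c - z \<in> S" if zz: "z \<in> S" "z \<le> y" for z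
  proof -
    obtain i j where z: "z = real i + real j * \<theta>" "i \<le> A" "j \<le> B" using bound zz by blast
    have "c - z = real (A - i) + real (B - j) * \<theta>"
      using z by (simp add: c_def of_nat_diff algebra_simps)
    thus ?thesis using Smem by blast
  qed
  define x where "x = c - y"
  have xS: "x \<in> S" unfolding x_def using refl yS by simp
  have xy: "x < y"
  proof (rule ccontr)
    assume "\<not> x < y"
    hence "real A = y" "real B * \<theta> = y" using hA hB unfolding x_def c_def by linarith+
    hence "of_int (int A) + of_int 0 * \<theta> = of_int 0 + of_int (int B) * \<theta>" by simp
    hence "int A = 0" using un by blast
    hence "A = 0" by simp
    thus False using \<open>real A = y\<close> ypos by simp
  qed
  define m where "m = rk \<theta> x"
  have sm: "s m = x" unfolding m_def using s_of[OF irr gt1 xS] .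
  have mn: "m < n" using xy sless unfolding y_def sm[symmetric] by simp
  have reflk: "c - s (m + k) = s (n - k)" if "k \<le> n - m" for k
    using that
  proof (induction k)
    case 0 thus ?case using sm x_def y_def by simp
  next
    case (Suc k)
    have IH: "c - s (m + k) = s (n - k)" using Suc by simp
    have nk: "n - k = Suc (n - Suc k)" using Suc mn by simp
    have z1: "s (m + Suc k) \<le> y" unfolding y_def using Suc sle by simp
    have "c - s (m + Suc k) < c - s (m + k)" using sless by simp
    hence "c - s (m + Suc k) < s (Suc (n - Suc k))" using IH nk by simp
    hence le1: "c - s (m + Suc k) \<le> s (n - Suc k)" using snext refl[OF sin z1] by blast
    have z2: "s (n - Suc k) \<le> y" unfolding y_def using sle by simp
    have "s (n - Suc k) < s (n - k)" using sless nk by simp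
    hence "s (m + k) < c - s (n - Suc k)" using IH by simp
    hence "s (Suc (m + k)) \<le> c - s (n - Suc k)"
      using sless sle refl[OF sin z2] s_of[OF irr gt1] 
      by (metis Suc_leI rk_less[OF irr gt1] s_rk[OF irr gt1] sin)
    thus ?case using le1 by simp
  qed
  have pal: "\<forall>t<n-m. delta \<theta> (m+t) = delta \<theta> (n-1-t)"
  proof (intro allI impI)
    fix t assume t: "t < n - m"
    have e1: "c - s (m + t) = s (n - t)" using reflk t by simp
    have e2: "c - s (m + Suc t) = s (n - Suc t)" using reflk[of "Suc t"] t by simp
    have nt: "n - t = Suc (n - 1 - t)" using t by simp
    show "delta \<theta> (m+t) = delta \<theta> (n-1-t)"
      unfolding delta_def using e1 e2 nt by (simp add: algebra_simps)
  qed
  have uniqocc: "i = m" if i: "i + (n-m) \<le> n" "\<forall>t<n-m. delta \<theta> (i+t) = delta \<theta> (m+t)" for i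
  proof (rule ccontr)
    assume "i \<noteq> m"
    hence im: "i < m" using i by simp
    define \<tau> where "\<tau> = s i - s m"
    have tneg: "\<tau> < 0" unfolding \<tau>_def using im sless by simp
    have shift: "s (i + t) = s (m + t) + \<tau>" if "t \<le> n - m" for t
      using that
    proof (induction t)
      case 0 thus ?case by (simp add: \<tau>_def)
    next
      case (Suc t)
      hence "delta \<theta> (i+t) = delta \<theta> (m+t)" using i by simp
      thus ?case using Suc by (simp add: delta_def algebra_simps)
    qed
    have trans: "\<exists>a b::nat. z + \<tau> = real a + real b * \<theta>" if zz: "z \<in> S" "x \<le> z" "z \<le> y" for z
    proof -
      obtain k where k: "m \<le> k" "k \<le> n" "z = s k" using sbet[OF zz(1)] zz sm y_def by metis
      have "s (i + (k - m)) = z + \<tau>" using shift[of "k - m"] k by simp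
      thus ?thesis using sin Smem by metis
    qed
    have AS: "real A \<in> S" using Smem by (metis mult_zero_left of_nat_0 add_0_right)
    have BS: "real B * \<theta> \<in> S" using Smem by (metis of_nat_0 add_0)
    have "x \<le> real A" unfolding x_def c_def using hB by simp
    then obtain a1 b1 :: nat where 1: "real A + \<tau> = real a1 + real b1 * \<theta>" using trans AS hA by blast
    have "x \<le> real B * \<theta>" unfolding x_def c_def using hA by simp
    then obtain a2 b2 :: nat where 2: "real B * \<theta> + \<tau> = real a2 + real b2 * \<theta>" using trans BS hB by blast
    have "of_int (int a1 - int A) + of_int (int b1) * \<theta> = of_int (int a2) + of_int (int b2 - int B) * \<theta>"
      using 1 2 by (simp add: algebra_simps)
    hence "int a1 - int A = int a2" using un by blast
    hence "\<tau> = real a2 + real b1 * \<theta>" using 1 by (simp add: algebra_simps)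
    moreover have "real b1 * \<theta> \<ge> 0" using gt1 by simp
    ultimately show False using tneg by simp
  qed
  show ?thesis using mn pal uniqocc by blast
qed

end


context
  fixes \<theta> :: real
  assumes irr: "\<theta> \<notin> \<rat>" and gt1: "1 < \<theta>"
begin

lemma take_drop_map: "i + l \<le> n \<Longrightarrow> take l (drop i (map f [0..<n])) = map f [i..<i+l]"
  by (simp add: take_map drop_map)

lemma word_lemma:
  assumes n1: "1 \<le> n"
  shows "\<exists>u. suffix u (map (lambda_word \<theta>) [0..<n]) \<and> u \<noteq> [] \<and> palindrome u
                 \<and> occ_count u (map (lambda_word \<theta>) [0..<n]) = 1"
proof -
  obtain m where mn: "m < n" and pal: "\<forall>t<n-m. delta \<theta> (m+t) = delta \<theta> (n-1-t)"
    and uq: "\<forall>i. i + (n-m) \<le> n \<and> (\<forall>t<n-m. delta \<theta> (i+t) = delta \<theta> (m+t)) \<longrightarrow> i = m"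
    using main[OF irr gt1 n1] by blast
  let ?L = "lambda_word \<theta>"
  define u where "u = map ?L [m..<n]"
  have split: "[0..<n] = [0..<m] @ [m..<n]" using mn upt_add_eq_append[of 0 m "n - m"] by simp
  have suf: "suffix u (map ?L [0..<n])" unfolding u_def split by (simp add: suffix_def)
  have ne: "u \<noteq> []" unfolding u_def using mn by simp
  have "rev u = u"
  proof (rule nth_equalityI)
    show "length (rev u) = length u" by simp
    fix t assume "t < length (rev u)"
    hence t: "t < n - m" by (simp add: u_def)
    have "rev u ! t = ?L (m + (n - m - 1 - t))" using t by (simp add: u_def rev_nth)
    also have "\<dots> = ?L (m + t)"
    proof (rule lam_eq)
      have "delta \<theta> (m + (n - m - 1 - t)) = delta \<theta> (n - 1 - (n - m - 1 - t))"
        using pal t by simp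
      also have "n - 1 - (n - m - 1 - t) = m + t" using t by simp
      finally show "delta \<theta> (m + (n - m - 1 - t)) = delta \<theta> (m + t)" .
    qed
    also have "\<dots> = u ! t" using t by (simp add: u_def)
    finally show "rev u ! t = u ! t" .
  qed
  hence palu: "palindrome u" by (simp add: palindrome_def)
  have "{i. i + length u \<le> length (map ?L [0..<n]) \<and> take (length u) (drop i (map ?L [0..<n])) = u} = {m}"
  proof (intro set_eqI iffI)
    fix i assume "i \<in> {i. i + length u \<le> length (map ?L [0..<n]) \<and> take (length u) (drop i (map ?L [0..<n])) = u}"
    hence i1: "i + (n - m) \<le> n" and i2: "map ?L [i..<i + (n-m)] = map ?L [m..<n]"
      using take_drop_map[of i "n-m" n ?L] by (auto simp: u_def)
    have "\<forall>t<n-m. delta \<theta> (i+t) = delta \<theta> (m+t)"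
    proof (intro allI impI)
      fix t assume t: "t < n - m"
      have "map ?L [i..<i + (n-m)] ! t = map ?L [m..<n] ! t" using i2 by simp
      hence "?L (i + t) = ?L (m + t)" using t by simp
      thus "delta \<theta> (i+t) = delta \<theta> (m+t)" by (rule lam_inj)
    qed
    thus "i \<in> {m}" using uq i1 by simp
  next
    fix i assume "i \<in> {m}"
    hence "i = m" by simp
    thus "i \<in> {i. i + length u \<le> length (map ?L [0..<n]) \<and> take (length u) (drop i (map ?L [0..<n])) = u}"
      using mn take_drop_map[of m "n-m" n ?L] by (simp add: u_def)
  qed
  hence "occ_count u (map ?L [0..<n]) = 1" by (simp add: occ_count_def)
  thus ?thesis using suf ne palu by blast
qed

lemma prefix_rich: "card (pal_factors (map (lambda_word \<theta>) [0..<n])) = n + 1"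
proof (induction n)
  case 0 thus ?case by (simp add: pal_nil)
next
  case (Suc n)
  let ?w = "map (lambda_word \<theta>) [0..<n]" and ?c = "lambda_word \<theta> n"
  have e: "map (lambda_word \<theta>) [0..<Suc n] = ?w @ [?c]" by simp
  obtain u where u: "suffix u (?w @ [?c])" "palindrome u" "occ_count u (?w @ [?c]) = 1"
    using word_lemma[of "Suc n"] e by auto
  have "\<not> sublist u ?w" by (rule unioc_not_sublist[OF u(3) u(1)])
  hence "u \<notin> pal_factors ?w" by (simp add: pal_factors_def)
  moreover have "u \<in> pal_factors (?w @ [?c])" using u by (auto simp: pal_factors_def suffix_imp_sublist)
  moreover have "pal_factors ?w \<subseteq> pal_factors (?w @ [?c])" by (rule pal_mono) simp
  ultimately have "insert u (pal_factors ?w) \<subseteq> pal_factors (?w @ [?c])" by blast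
  hence "card (insert u (pal_factors ?w)) \<le> card (pal_factors (?w @ [?c]))"
    by (rule card_mono[OF finite_pal])
  hence "Suc n + 1 \<le> card (pal_factors (?w @ [?c]))"
    using Suc \<open>u \<notin> pal_factors ?w\<close> by (simp add: finite_pal)
  moreover have "card (pal_factors (?w @ [?c])) \<le> Suc n + 1" using pal_le[of "?w @ [?c]"] by simp
  ultimately show ?case using e by simp
qed

lemma rich: "rich_infinite (lambda_word \<theta>)"
  unfolding rich_infinite_def
proof (intro allI impI)
  fix w assume "factor_of w (lambda_word \<theta>)"
  then obtain i where w: "w = map (lambda_word \<theta>) [i..<i + length w]" by (auto simp: factor_of_def)
  have "[0..<i + length w] = [0..<i] @ [i..<i + length w]" using upt_add_eq_append[of 0 i "length w"] by simp
  hence "map (lambda_word \<theta>) [0..<i + length w] = map (lambda_word \<theta>) [0..<i] @ w @ []"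
    using w by simp
  hence "i + length w + 1 \<le> card (pal_factors w) + i"
    using prefix_rich[of "i + length w"] pal_app[of "map (lambda_word \<theta>) [0..<i]" w "[]"] by simp
  thus "rich_finite w" using pal_le[of w] by (simp add: rich_finite_def)
qed

end

theorem theorem12:
  fixes \<theta> :: real
  assumes "\<theta> \<notin> \<rat>" and "1 < \<theta>" and "\<theta> < 2"
  shows "rich_infinite (lambda_word \<theta>)
     \<and> (\<forall>n\<ge>1. \<exists>u. suffix u (map (lambda_word \<theta>) [0..<n]) \<and> u \<noteq> [] \<and> palindrome u
                 \<and> occ_count u (map (lambda_word \<theta>) [0..<n]) = 1)"
  using rich[OF assms(1,2)] word_lemma[OF assms(1,2)] by blast


end
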